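(* Let $\Delta \geq 0$ and let $H$ be an $n$-vertex graph with maximum degree at most $\Delta$. Then there is a collection of $t \leq 300 \sqrt{\Delta n}$ matchings $M_1, \dotsc, M_t \subseteq H$ such that (M1) each edge of $H$ belongs to exactly two of the matchings $M_1,\dots,M_t$; and (M2) for each $1 \leq i < j \leq t$, the matchings $M_i$ and $M_j$ have at most one edge in common. *)

theory Defs
  imports Complex_Main
begin

definition simple_graph :: "'a set \<Rightarrow> 'a set set \<Rightarrow> bool" where
  "simple_graph V E \<longleftrightarrow> finite V \<and> (\<forall>e\<in>E. e \<subseteq> V \<and> card e = 2)"

definition degree :: "'a set set \<Rightarrow> 'a \<Rightarrow> nat" where
  "degree E v = card {e\<in>E. v \<in> e}"

definition max_degree_le :: "'a set \<Rightarrow> 'a set set \<Rightarrow> nat \<Rightarrow> bool" where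
  "max_degree_le V E \<Delta> \<longleftrightarrow> (\<forall>v\<in>V. degree E v \<le> \<Delta>)"

definition matching_in :: "'a set set \<Rightarrow> 'a set set \<Rightarrow> bool" where
  "matching_in E M \<longleftrightarrow> M \<subseteq> E \<and> (\<forall>e1\<in>M. \<forall>e2\<in>M. e1 \<noteq> e2 \<longrightarrow> e1 \<inter> e2 = {})"

end

theory Submission
  imports Defs
begin

lemma greedy:
  assumes fin: "finite F" and sub: "F \<subseteq> E" and sg: "simple_graph V E"
    and deg: "\<forall>v\<in>V. degree E v \<le> D" and cE: "card E \<le> K" and Ks: "K < s choose 2"
    and st: "4*D + s \<le> t"
  shows "\<exists>p. (\<forall>e\<in>F. p e \<subseteq> {1..t} \<and> card (p e) = 2) \<and>
     (\<forall>e\<in>F. \<forall>f\<in>F. e \<noteq> f \<longrightarrow> p e \<noteq> p f \<and> (e \<inter> f \<noteq> {} \<longrightarrow> p e \<inter> p f = {}))"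
  using fin sub
proof (induction F rule: finite_induct)
  case empty
  then show ?case by auto
next
  case (insert x F)
  have finV: "finite V" using sg by (simp add: simple_graph_def)
  have finE: "finite E"
  proof -
    have "E \<subseteq> Pow V" using sg by (auto simp: simple_graph_def)
    then show ?thesis using finV finite_subset by blast
  qed
  from insert obtain p where
    p1: "\<forall>e\<in>F. p e \<subseteq> {1..t} \<and> card (p e) = 2" and
    p2: "\<forall>e\<in>F. \<forall>f\<in>F. e \<noteq> f \<longrightarrow> p e \<noteq> p f \<and> (e \<inter> f \<noteq> {} \<longrightarrow> p e \<inter> p f = {})"
    by auto
  have xE: "x \<in> E" using insert by auto
  then have "x \<subseteq> V" "card x = 2" using sg by (auto simp: simple_graph_def)
  then obtain u v where x: "x = {u,v}" "u \<in> V" "v \<in> V" by (auto simp: card_2_iff)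
  define N where "N = {f\<in>F. f \<inter> x \<noteq> {}}"
  define U where "U = \<Union>(p ` N)"
  define S where "S = {1..t} - U"
  have finF: "finite F" using insert by auto
  have finN: "finite N" using finF by (simp add: N_def)
  have "N \<subseteq> {f\<in>E. u\<in>f} \<union> {f\<in>E. v\<in>f}" using insert x by (auto simp: N_def)
  then have "card N \<le> card ({f\<in>E. u\<in>f} \<union> {f\<in>E. v\<in>f})"
    using finE by (intro card_mono) auto
  also have "\<dots> \<le> degree E u + degree E v" unfolding degree_def by (rule card_Un_le)
  also have "\<dots> \<le> 2 * D" proof -
    have "degree E u \<le> D" "degree E v \<le> D" using deg x by auto
    then show ?thesis by linarith
  qed
  finally have cN: "card N \<le> 2 * D" .
  have "card U \<le> (\<Sum>f\<in>N. card (p f))" unfolding U_def using finN by (rule card_UN_le)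
  also have "\<dots> = (\<Sum>f\<in>N. 2)" using p1 by (intro sum.cong) (auto simp: N_def)
  also have "\<dots> = 2 * card N" by simp
  finally have cU: "card U \<le> 4 * D" using cN by linarith
  have "{1..t} \<subseteq> S \<union> U" by (auto simp: S_def)
  have UT: "U \<subseteq> {1..t}" using p1 by (auto simp: U_def N_def)
  have "card {1..t} \<le> card (S \<union> U)"
    by (rule card_mono) (use UT finite_subset in \<open>auto simp: S_def\<close>)
  also have "\<dots> \<le> card S + card U" by (rule card_Un_le)
  finally have cS: "s \<le> card S" using cU st by simp
  obtain S' where S': "S' \<subseteq> S" "card S' = s"
    using obtain_subset_with_card_n[OF cS] by blast
  have finS': "finite S'" using S' by (metis finite_subset finite_atLeastAtMost S_def Diff_subset)
  define Q where "Q = {A. A \<subseteq> S' \<and> card A = 2}"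
  have cQ: "card Q = s choose 2" unfolding Q_def using n_subsets[OF finS'] S' by simp
  have "card (p ` F) \<le> card F" using finF by (rule card_image_le)
  also have "\<dots> \<le> card E" using insert finE by (intro card_mono) auto
  finally have "card (p ` F) < card Q" using cE Ks cQ by linarith
  then have "\<not> Q \<subseteq> p ` F" using finF by (metis card_mono finite_imageI not_le)
  then obtain A where A: "A \<in> Q" "A \<notin> p ` F" by blast
  have AS: "A \<subseteq> S" "card A = 2" using A S' by (auto simp: Q_def)
  have xF: "x \<notin> F" using insert by auto
  let ?q = "p(x := A)"
  have c1: "\<forall>e\<in>insert x F. ?q e \<subseteq> {1..t} \<and> card (?q e) = 2"
    using p1 AS by (auto simp: S_def)
  have dis: "A \<inter> p g = {}" if "g \<in> F" "g \<inter> x \<noteq> {}" for g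
    using that AS by (auto simp: S_def U_def N_def)
  have c2: "\<forall>e\<in>insert x F. \<forall>f\<in>insert x F. e \<noteq> f \<longrightarrow> ?q e \<noteq> ?q f \<and> (e \<inter> f \<noteq> {} \<longrightarrow> ?q e \<inter> ?q f = {})"
  proof (intro ballI impI conjI)
    fix e f assume e: "e \<in> insert x F" and f: "f \<in> insert x F" and ef: "e \<noteq> f"
    show "?q e \<noteq> ?q f"
      using e f ef A(2) p2 xF by auto
    assume "e \<inter> f \<noteq> {}"
    then show "?q e \<inter> ?q f = {}"
    proof (cases "e = x")
      case True
      then have "f \<in> F" "f \<noteq> x" using f ef by auto
      then show ?thesis using True dis[of f] \<open>e \<inter> f \<noteq> {}\<close> by (simp add: Int_commute)
    next
      case False
      then have eF: "e \<in> F" using e by auto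
      show ?thesis
      proof (cases "f = x")
        case True
        then show ?thesis using False eF dis[of e] \<open>e \<inter> f \<noteq> {}\<close> by auto
      next
        case False
        then show ?thesis using \<open>e \<noteq> x\<close> eF f ef p2 \<open>e \<inter> f \<noteq> {}\<close> by auto
      qed
    qed
  qed
  show ?case using c1 c2 by blast
qed


lemma deg_le_card:
  assumes sg: "simple_graph V E" and v: "v \<in> V"
  shows "degree E v \<le> card V"
proof -
  have finV: "finite V" using sg by (simp add: simple_graph_def)
  let ?A = "{e\<in>E. v \<in> e}"
  have inj: "inj_on (\<lambda>e. e - {v}) ?A"
  proof (rule inj_onI)
    fix e1 e2 assume "e1 \<in> ?A" "e2 \<in> ?A" "e1 - {v} = e2 - {v}"
    then show "e1 = e2" by (metis (no_types, lifting) insert_Diff mem_Collect_eq)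
  qed
  have img: "(\<lambda>e. e - {v}) ` ?A \<subseteq> (\<lambda>w. {w}) ` V"
  proof
    fix y assume "y \<in> (\<lambda>e. e - {v}) ` ?A"
    then obtain e where e: "e \<in> E" "v \<in> e" "y = e - {v}" by auto
    have "e \<subseteq> V" "card e = 2" using e sg by (auto simp: simple_graph_def)
    then have fe: "finite e" by (metis card.infinite zero_neq_numeral)
    have "card y = 1" using e \<open>card e = 2\<close> fe by simp
    then obtain w where "y = {w}" by (auto simp: card_1_singleton_iff)
    moreover have "w \<in> V" using \<open>y = {w}\<close> e \<open>e \<subseteq> V\<close> by auto
    ultimately show "y \<in> (\<lambda>w. {w}) ` V" by auto
  qed
  have "degree E v = card ((\<lambda>e. e - {v}) ` ?A)"
    unfolding degree_def using inj by (simp add: card_image)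
  also have "\<dots> \<le> card ((\<lambda>w. {w}) ` V)" using img finV by (intro card_mono) auto
  also have "\<dots> \<le> card V" using finV by (rule card_image_le)
  finally show ?thesis .
qed

theorem lemma6p1:
  fixes V :: "'a set" and E :: "'a set set" and n \<Delta> :: nat
  assumes "simple_graph V E" and "card V = n" and "max_degree_le V E \<Delta>"
  shows "\<exists>(t::nat) (M :: nat \<Rightarrow> 'a set set).
           real t \<le> 300 * sqrt (real \<Delta> * real n)
         \<and> (\<forall>i\<in>{1..t}. matching_in E (M i))
         \<and> (\<forall>e\<in>E. card {i\<in>{1..t}. e \<in> M i} = 2)
         \<and> (\<forall>i\<in>{1..t}. \<forall>j\<in>{1..t}. i < j \<longrightarrow> card (M i \<inter> M j) \<le> 1)"
proof (cases "E = {}")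
  case True
  show ?thesis
    by (rule exI[of _ 0], rule exI[of _ "\<lambda>_. {}"]) (auto simp: True)
next
  case False
  note sg = assms(1)
  have finV: "finite V" using sg by (simp add: simple_graph_def)
  have finE: "finite E"
  proof -
    have "E \<subseteq> Pow V" using sg by (auto simp: simple_graph_def)
    then show ?thesis using finV finite_subset by blast
  qed
  define D where "D = min \<Delta> n"
  have deg: "\<forall>v\<in>V. degree E v \<le> D"
  proof
    fix v assume v: "v \<in> V"
    have "degree E v \<le> \<Delta>" using assms(3) v by (simp add: max_degree_le_def)
    moreover have "degree E v \<le> n" using deg_le_card[OF sg v] assms(2) by simp
    ultimately show "degree E v \<le> D" by (simp add: D_def)
  qed
  obtain e0 where e0: "e0 \<in> E" using False by auto
  have "e0 \<subseteq> V" "card e0 = 2" using e0 sg by (auto simp: simple_graph_def)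
  then obtain u w where uw: "e0 = {u, w}" "u \<noteq> w" by (auto simp: card_2_iff)
  have uV: "u \<in> V" using uw \<open>e0 \<subseteq> V\<close> by auto
  have "e0 \<in> {e\<in>E. u \<in> e}" using e0 uw by auto
  then have "1 \<le> degree E u"
  proof -
    have "finite {e\<in>E. u \<in> e}" using finE by simp
    then have "0 < card {e\<in>E. u \<in> e}" using \<open>e0 \<in> {e\<in>E. u \<in> e}\<close> card_gt_0_iff by blast
    then show ?thesis by (simp add: degree_def)
  qed
  moreover have "degree E u \<le> D" using deg uV by blast
  ultimately have D1: "1 \<le> D" by linarith
  have "card e0 \<le> card V" using \<open>e0 \<subseteq> V\<close> finV by (rule card_mono[rotated])
  then have n2: "2 \<le> n" using assms(2) \<open>card e0 = 2\<close> by simp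
  have DN: "D \<le> n" by (simp add: D_def)
  have cE: "card E \<le> D * n"
  proof -
    have "E \<subseteq> (\<Union>v\<in>V. {e\<in>E. v \<in> e})"
    proof
      fix e assume "e \<in> E"
      then have "e \<subseteq> V" "card e = 2" using sg by (auto simp: simple_graph_def)
      then obtain a b where "e = {a,b}" by (auto simp: card_2_iff)
      then show "e \<in> (\<Union>v\<in>V. {e\<in>E. v \<in> e})" using \<open>e \<in> E\<close> \<open>e \<subseteq> V\<close> by auto
    qed
    then have "card E \<le> card (\<Union>v\<in>V. {e\<in>E. v \<in> e})" using finE finV by (intro card_mono) auto
    also have "\<dots> \<le> (\<Sum>v\<in>V. card {e\<in>E. v \<in> e})" using finV by (rule card_UN_le)
    also have "\<dots> \<le> (\<Sum>v\<in>V. D)" using deg unfolding degree_def by (intro sum_mono) auto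
    also have "\<dots> = D * n" using assms(2) by simp
    finally show ?thesis .
  qed
  define r where "r = nat \<lceil>sqrt (real D * real n)\<rceil>"
  have "1 * 1 \<le> D * n" using D1 n2 by (intro mult_mono) auto
  then have "1 \<le> real D * real n" by (simp flip: of_nat_mult)
  then have sq1: "1 \<le> sqrt (real D * real n)" by simp
  have r1: "real r \<ge> sqrt (real D * real n)" unfolding r_def by linarith
  have r2: "real r < sqrt (real D * real n) + 1"
  proof -
    have "real r = real_of_int \<lceil>sqrt (real D * real n)\<rceil>" unfolding r_def
      using sq1 by (simp add: of_nat_nat)
    then show ?thesis using ceiling_correct[of "sqrt (real D * real n)"] by linarith
  qed
  have "real D * real n \<le> (real r)^2"
    using r1 by (rule sqrt_le_D)
  then have rDn: "D * n \<le> r * r" by (simp add: power2_eq_square flip: of_nat_mult)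
  have r1': "1 \<le> r" using r1 sq1 by linarith
  define s where "s = 2 * r + 1"
  have "s choose 2 = s * (s - 1) div 2" by (rule choose_two)
  also have "\<dots> = (2*r+1) * r" by (simp add: s_def)
  also have "\<dots> = r * r + (r * r + r)" by (simp add: algebra_simps)
  finally have Ks: "D * n < s choose 2" using rDn r1' by linarith
  define t where "t = 4 * D + s"
  obtain p where
    p1: "\<forall>e\<in>E. p e \<subseteq> {1..t} \<and> card (p e) = 2" and
    p2: "\<forall>e\<in>E. \<forall>f\<in>E. e \<noteq> f \<longrightarrow> p e \<noteq> p f \<and> (e \<inter> f \<noteq> {} \<longrightarrow> p e \<inter> p f = {})"
    using greedy[OF finE subset_refl sg deg cE Ks, of t] unfolding t_def by auto
  define M where "M i = {e\<in>E. i \<in> p e}" for i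
  have "real D \<le> sqrt (real D * real n)"
  proof (rule real_le_rsqrt)
    have "D * D \<le> D * n" using DN by (rule mult_left_mono) simp
    then show "(real D)^2 \<le> real D * real n" by (simp add: power2_eq_square flip: of_nat_mult)
  qed
  then have tb: "real t \<le> 9 * sqrt (real D * real n)"
  proof -
    have "real t = 4 * real D + 2 * real r + 1" unfolding t_def s_def by simp
    then show ?thesis using r2 sq1 \<open>real D \<le> sqrt (real D * real n)\<close> by linarith
  qed
  have "sqrt (real D * real n) \<le> sqrt (real \<Delta> * real n)"
    by (simp add: D_def mult_right_mono)
  then have T1: "real t \<le> 300 * sqrt (real \<Delta> * real n)" using tb sq1 by linarith
  have T2: "\<forall>i\<in>{1..t}. matching_in E (M i)"
    unfolding matching_in_def M_def using p2 by blast
  have T3: "\<forall>e\<in>E. card {i\<in>{1..t}. e \<in> M i} = 2"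
  proof
    fix e assume e: "e \<in> E"
    have "p e \<subseteq> {1..t}" using e p1 by blast
    then have "{i\<in>{1..t}. e \<in> M i} = p e" using e by (auto simp: M_def)
    then show "card {i\<in>{1..t}. e \<in> M i} = 2" using e p1 by simp
  qed
  have T4: "\<forall>i\<in>{1..t}. \<forall>j\<in>{1..t}. i < j \<longrightarrow> card (M i \<inter> M j) \<le> 1"
  proof (intro ballI impI)
    fix i j :: nat assume "i \<in> {1..t}" "j \<in> {1..t}" and ij: "i < j"
    have "\<forall>e\<in>M i \<inter> M j. \<forall>f\<in>M i \<inter> M j. e = f"
    proof (intro ballI, rule ccontr)
      fix e f assume e: "e \<in> M i \<inter> M j" and f: "f \<in> M i \<inter> M j" and ef: "e \<noteq> f"
      have eE: "e \<in> E" "f \<in> E" using e f by (auto simp: M_def)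
      have "{i,j} \<subseteq> p e" "{i,j} \<subseteq> p f" using e f by (auto simp: M_def)
      moreover have "card {i,j} = 2" using ij by simp
      moreover have "finite (p e)" "finite (p f)" using p1 eE by (metis card.infinite zero_neq_numeral)+
      ultimately have "p e = {i,j}" "p f = {i,j}" using p1 eE by (metis card_subset_eq)+
      moreover have "p e \<noteq> p f" using p2 eE ef by blast
      ultimately show False by simp
    qed
    moreover have "finite (M i \<inter> M j)" using finE by (simp add: M_def)
    ultimately show "card (M i \<inter> M j) \<le> 1" using card_le_Suc0_iff_eq by (metis One_nat_def)
  qed
  show ?thesis using T1 T2 T3 T4 by blast
qed

end
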